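(* Let $\mathcal H$ be a finite-dimensional Hilbert space, $\rho=|\psi\rangle\langle\psi|$ a pure state, and let $\mathcal S=\{\rho,\sigma^{(1)},\dots,\sigma^{(n)}\}$ be a medium consistent family of histories. Then there exists a medium consistent family $\mathcal S'=\{\rho,\sigma'^{(1)},\dots,\sigma'^{(n)}\}$ in which each $\sigma'^{(i)}=\{|\phi^{(i)}_j\rangle\langle\phi^{(i)}_j|\}_j$ consists of rank-1 projectors and is a fine graining of $\sigma^{(i)}$.
   Context: A set of projectors $\sigma=\{P_\alpha\}_{\alpha=1,\dots,m}$ on $\mathcal H$ is exhaustive and exclusive if $\sum_\alpha P_\alpha=\mathbb 1$ and $P_\alpha P_\beta=\delta_{\alpha\beta}P_\alpha$. A family of histories $\{\rho,\sigma^{(1)},\dots,\sigma^{(n)}\}$ consists of an initial density matrix $\rho$ and exhaustive exclusive sets $\sigma^{(j)}=\{P^{(j)}_{\alpha_j}\}$ (Heisenberg-picture projectors at successive times $t_1<\dots<t_n$). A history is a tuple $\alpha=(\alpha_1,\dots,\alpha_n)$ with history operator $C_\alpha=P^{(1)}_{\alpha_1}\cdots P^{(n)}_{\alpha_n}$, probability $Pr(\alpha)=\mathrm{Tr}\{C_\alpha^\dagger\rho C_\alpha\}$ and coherence function $D(\alpha;\beta)=\mathrm{Tr}\{C_\alpha^\dagger\rho C_\beta\}$. The family is medium consistent if $D(\alpha;\beta)=\delta_{\alpha\beta}Pr(\alpha)$ for all histories $\alpha,\beta$. An exhaustive exclusive set $\sigma'$ is a fine graining of $\sigma$ if every projector of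 $\sigma$ is a sum of projectors of $\sigma'$ (equivalently $\sigma$ is a coarse graining of $\sigma'$). *)

theory Defs
  imports "HOL-Analysis.Analysis"
begin

type_synonym 'n cmat = "complex^'n^'n"

definition dagger :: "('n::finite) cmat \<Rightarrow> 'n cmat" where
  "dagger A = (\<chi> i j. cnj (A $ j $ i))"

definition mtrace :: "('n::finite) cmat \<Rightarrow> complex" where
  "mtrace A = (\<Sum>i\<in>UNIV. A $ i $ i)"

definition outer :: "complex^('n::finite) \<Rightarrow> complex^'n \<Rightarrow> 'n cmat" where
  "outer \<psi> \<phi> = (\<chi> i j. \<psi> $ i * cnj (\<phi> $ j))"

definition is_projector :: "('n::finite) cmat \<Rightarrow> bool" where
  "is_projector P \<longleftrightarrow> P ** P = P \<and> dagger P = P"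

definition rank1_projector :: "('n::finite) cmat \<Rightarrow> bool" where
  "rank1_projector P \<longleftrightarrow> (\<exists>\<phi>. norm \<phi> = 1 \<and> P = outer \<phi> \<phi>)"

definition pure_state :: "('n::finite) cmat \<Rightarrow> bool" where
  "pure_state \<rho> \<longleftrightarrow> (\<exists>\<psi>. norm \<psi> = 1 \<and> \<rho> = outer \<psi> \<psi>)"

definition exh_excl :: "('n::finite) cmat list \<Rightarrow> bool" where
  "exh_excl \<sigma> \<longleftrightarrow>
     (\<forall>P\<in>set \<sigma>. is_projector P) \<and>
     (\<Sum>a<length \<sigma>. \<sigma> ! a) = mat 1 \<and>
     (\<forall>a<length \<sigma>. \<forall>b<length \<sigma>. \<sigma> ! a ** \<sigma> ! b = (if a = b then \<sigma> ! a else 0))"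

text \<open>A family of histories (apart from rho) is the list of sets sigma^(1),...,sigma^(n).\<close>
definition histories :: "('n::finite) cmat list list \<Rightarrow> nat list set" where
  "histories F = {a. length a = length F \<and> (\<forall>j<length F. a ! j < length (F ! j))}"

definition hist_op :: "('n::finite) cmat list list \<Rightarrow> nat list \<Rightarrow> 'n cmat" where
  "hist_op F a = foldr (**) (map (\<lambda>j. F ! j ! (a ! j)) [0..<length F]) (mat 1)"

definition coherence :: "('n::finite) cmat \<Rightarrow> 'n cmat list list \<Rightarrow> nat list \<Rightarrow> nat list \<Rightarrow> complex" where
  "coherence \<rho> F a b = mtrace (dagger (hist_op F a) ** \<rho> ** hist_op F b)"

definition hist_prob :: "('n::finite) cmat \<Rightarrow> 'n cmat list list \<Rightarrow> nat list \<Rightarrow> complex" where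
  "hist_prob \<rho> F a = mtrace (dagger (hist_op F a) ** \<rho> ** hist_op F a)"

definition medium_consistent :: "('n::finite) cmat \<Rightarrow> 'n cmat list list \<Rightarrow> bool" where
  "medium_consistent \<rho> F \<longleftrightarrow>
     (\<forall>a\<in>histories F. \<forall>b\<in>histories F.
        coherence \<rho> F a b = (if a = b then hist_prob \<rho> F a else 0))"

definition fine_graining :: "('n::finite) cmat list \<Rightarrow> 'n cmat list \<Rightarrow> bool" where
  "fine_graining \<sigma>' \<sigma> \<longleftrightarrow>
     (\<forall>a<length \<sigma>. \<exists>S\<subseteq>{..<length \<sigma>'}. \<sigma> ! a = (\<Sum>k\<in>S. \<sigma>' ! k))"

end

theory Submission
  imports Defs
begin

definition cinner :: "complex^('n::finite) \<Rightarrow> complex^'n \<Rightarrow> complex" where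
  "cinner x y = (\<Sum>i\<in>UNIV. x $ i * cnj (y $ i))"

lemma cinner_conj: "cinner y x = cnj (cinner x y)"
  by (simp add: cinner_def mult.commute)

lemma cinner_mat_left: "cinner (A *v x) y = cinner x (dagger A *v y)"
proof -
  have "cinner (A *v x) y = (\<Sum>i\<in>UNIV. \<Sum>j\<in>UNIV. A$i$j * x$j * cnj (y$i))"
    unfolding cinner_def matrix_vector_mult_def by (simp add: sum_distrib_right)
  also have "\<dots> = (\<Sum>j\<in>UNIV. \<Sum>i\<in>UNIV. A$i$j * x$j * cnj (y$i))"
    by (rule sum.swap)
  also have "\<dots> = cinner x (dagger A *v y)"
    unfolding cinner_def matrix_vector_mult_def dagger_def
    by (simp add: sum_distrib_left mult.commute mult.left_commute)
  finally show ?thesis .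
qed

lemma cinner_self_norm: "cinner x x = complex_of_real ((norm x)^2)"
proof -
  have "(norm x)^2 = (\<Sum>i\<in>UNIV. (cmod (x$i))^2)"
    unfolding norm_vec_def L2_set_def by (simp add: sum_nonneg)
  then show ?thesis unfolding cinner_def
    by (simp add: complex_norm_square[symmetric])
qed

lemma cinner_self_eq_0: "cinner x x = 0 \<longleftrightarrow> x = 0"
  by (simp add: cinner_self_norm)

lemma cinner_zero_left[simp]: "cinner 0 y = 0" and cinner_zero_right[simp]: "cinner x 0 = 0"
  by (simp_all add: cinner_def)

lemma cinner_smult_left[simp]: "cinner (c *s x) y = c * cinner x y"
  by (simp add: cinner_def sum_distrib_left mult_ac)

lemma cinner_smult_right[simp]: "cinner x (c *s y) = cnj c * cinner x y"
  by (simp add: cinner_def sum_distrib_left mult_ac)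

lemma cinner_add_left: "cinner (x + y) z = cinner x z + cinner y z"
  by (simp add: cinner_def sum.distrib algebra_simps)

lemma cinner_sum_left: "cinner (sum f S) y = (\<Sum>s\<in>S. cinner (f s) y)"
  by (induction S rule: infinite_finite_induct) (auto simp: cinner_add_left)

lemma dagger_mult: "dagger (A ** B) = dagger B ** dagger A"
  unfolding dagger_def matrix_matrix_mult_def
  by (simp add: vec_eq_iff mult.commute)

lemma dagger_mat1[simp]: "dagger (mat 1) = mat 1"
  unfolding dagger_def mat_def by (simp add: vec_eq_iff)

lemma dagger_dagger[simp]: "dagger (dagger A) = A"
  unfolding dagger_def by (simp add: vec_eq_iff)

lemma outer_mult_vec: "outer x y *v z = cinner z y *s x"
  unfolding outer_def matrix_vector_mult_def cinner_def
  by (simp add: vec_eq_iff sum_distrib_left mult_ac)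

lemma mult_outer: "A ** outer x y = outer (A *v x) y"
  unfolding outer_def matrix_vector_mult_def matrix_matrix_mult_def
  by (simp add: vec_eq_iff sum_distrib_left sum_distrib_right mult_ac)

lemma outer_mult: "outer x y ** B = outer x (dagger B *v y)"
  unfolding outer_def matrix_vector_mult_def matrix_matrix_mult_def dagger_def
  by (simp add: vec_eq_iff sum_distrib_left mult_ac)

lemma mtrace_outer: "mtrace (outer x y) = cinner x y"
  unfolding outer_def mtrace_def cinner_def by simp

lemma dagger_outer: "dagger (outer x y) = outer y x"
  unfolding outer_def dagger_def by (simp add: vec_eq_iff)

lemma sum_mat_vec: "(sum f S) *v x = (\<Sum>s\<in>S. f s *v x)"
  by (induction S rule: infinite_finite_induct) (auto simp: matrix_vector_mult_add_rdistrib)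

lemma mtrace_diff: "mtrace (A - B) = mtrace A - mtrace B"
  unfolding mtrace_def by (simp add: sum_subtractf)


lemma matrix_sub_ldistrib: "(A::complex^'n^'m) ** (B - C) = A ** B - A ** C"
  by (simp add: matrix_matrix_mult_def vec_eq_iff sum_subtractf right_diff_distrib)

lemma matrix_sub_rdistrib: "((A::complex^'n^'m) - B) ** C = A ** C - B ** C"
  by (simp add: matrix_matrix_mult_def vec_eq_iff sum_subtractf left_diff_distrib)

lemma dagger_diff: "dagger (A - B) = dagger A - dagger B"
  by (simp add: dagger_def vec_eq_iff)

lemma proj_sa: "is_projector P \<Longrightarrow> dagger P = P"
  by (simp add: is_projector_def)

lemma proj_idem: "is_projector P \<Longrightarrow> P ** P = P"
  by (simp add: is_projector_def)

lemma proj_idem_vec: "is_projector P \<Longrightarrow> P *v (P *v x) = P *v x"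
  by (simp add: is_projector_def matrix_vector_mul_assoc)

lemma proj_trace_nonneg:
  assumes "is_projector P" shows "Re (mtrace P) \<ge> 0"
proof -
  have sa: "P $ j $ i = cnj (P $ i $ j)" for i j
  proof -
    have "P $ j $ i = dagger P $ j $ i" using proj_sa[OF assms] by simp
    also have "\<dots> = cnj (P $ i $ j)" by (simp add: dagger_def)
    finally show ?thesis .
  qed
  have "P $ i $ i = (\<Sum>j\<in>UNIV. P $ i $ j * P $ j $ i)" for i
  proof -
    have "P $ i $ i = (P ** P) $ i $ i" using proj_idem[OF assms] by simp
    also have "\<dots> = (\<Sum>j\<in>UNIV. P $ i $ j * P $ j $ i)" by (simp add: matrix_matrix_mult_def)
    finally show ?thesis .
  qed
  also have "\<dots> i = (\<Sum>j\<in>UNIV. complex_of_real ((cmod (P $ i $ j))^2))" for i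
  proof (rule sum.cong[OF refl])
    fix j
    have "P $ i $ j * P $ j $ i = P $ i $ j * cnj (P $ i $ j)" by (subst sa[of j i]) (rule refl)
    then show "P $ i $ j * P $ j $ i = complex_of_real ((cmod (P $ i $ j))^2)"
      by (simp only: complex_norm_square)
  qed
  finally have "Re (P $ i $ i) = (\<Sum>j\<in>UNIV. (cmod (P $ i $ j))^2)" for i
    by (simp only: Re_sum Re_complex_of_real)
  then have "Re (mtrace P) = (\<Sum>i\<in>UNIV. \<Sum>j\<in>UNIV. (cmod (P $ i $ j))^2)"
    unfolding mtrace_def Re_sum by simp
  also have "\<dots> \<ge> 0" by (intro sum_nonneg) auto
  finally show ?thesis .
qed

lemma outer_unit_proj:
  assumes "cinner \<phi> \<phi> = 1" shows "is_projector (outer \<phi> \<phi>)"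
  unfolding is_projector_def
  by (simp add: mult_outer outer_mult_vec assms dagger_outer)

definition nz :: "complex^('n::finite) \<Rightarrow> complex^'n" where
  "nz w = complex_of_real (1 / norm w) *s w"

lemma nz_unit: "w \<noteq> 0 \<Longrightarrow> cinner (nz w) (nz w) = 1"
proof -
  assume "w \<noteq> 0"
  then have n: "norm w \<noteq> 0" by simp
  have "cinner (nz w) (nz w) = complex_of_real ((1 / norm w) * (1 / norm w) * (norm w)^2)"
    unfolding nz_def by (simp only: cinner_smult_left cinner_smult_right) (simp add: cinner_self_norm)
  also have "(1 / norm w) * (1 / norm w) * (norm w)^2 = 1"
    using n by (simp add: power2_eq_square)
  finally show ?thesis by simp
qed


lemma nz_scale: "nz w = complex_of_real (1 / norm w) *s w" by (simp add: nz_def)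

lemma proj_decomp_aux:
  "\<forall>P W. is_projector (P::complex^('n::finite)^'n) \<longrightarrow> Re (mtrace P) < real n \<longrightarrow> finite W \<longrightarrow>
     (\<forall>w\<in>W. P *v w = w) \<longrightarrow> (\<forall>w\<in>W. \<forall>w'\<in>W. w \<noteq> w' \<longrightarrow> cinner w w' = 0) \<longrightarrow>
     (\<exists>\<Phi>. finite \<Phi> \<and> (\<forall>\<phi>\<in>\<Phi>. cinner \<phi> \<phi> = 1 \<and> P *v \<phi> = \<phi>) \<and>
        (\<forall>\<phi>\<in>\<Phi>. \<forall>\<phi>'\<in>\<Phi>. \<phi> \<noteq> \<phi>' \<longrightarrow> cinner \<phi> \<phi>' = 0) \<and>
        P = (\<Sum>\<phi>\<in>\<Phi>. outer \<phi> \<phi>) \<and> (\<forall>w\<in>W. w \<noteq> 0 \<longrightarrow> nz w \<in> \<Phi>))"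
proof (induction n)
  case 0
  show ?case using proj_trace_nonneg by fastforce
next
  case (Suc n)
  show ?case
  proof (intro allI impI)
    fix P :: "complex^'n^'n" and W
    assume proj: "is_projector P" and tr: "Re (mtrace P) < real (Suc n)" and fin: "finite W"
      and rng: "\<forall>w\<in>W. P *v w = w" and orth: "\<forall>w\<in>W. \<forall>w'\<in>W. w \<noteq> w' \<longrightarrow> cinner w w' = 0"
    show "\<exists>\<Phi>. finite \<Phi> \<and> (\<forall>\<phi>\<in>\<Phi>. cinner \<phi> \<phi> = 1 \<and> P *v \<phi> = \<phi>) \<and>
        (\<forall>\<phi>\<in>\<Phi>. \<forall>\<phi>'\<in>\<Phi>. \<phi> \<noteq> \<phi>' \<longrightarrow> cinner \<phi> \<phi>' = 0) \<and>
        P = (\<Sum>\<phi>\<in>\<Phi>. outer \<phi> \<phi>) \<and> (\<forall>w\<in>W. w \<noteq> 0 \<longrightarrow> nz w \<in> \<Phi>)"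
    proof (cases "P = 0")
      case True
      then show ?thesis using rng by (intro exI[of _ "{}"]) auto
    next
      case False
      then obtain x where x: "P *v x \<noteq> 0" using matrix_eq[of P 0] by auto
      define v where "v = (if \<exists>w\<in>W. w \<noteq> 0 then (SOME w. w \<in> W \<and> w \<noteq> 0) else P *v x)"
      have v: "v \<noteq> 0 \<and> P *v v = v \<and> (\<forall>w\<in>W. w \<noteq> v \<longrightarrow> cinner w v = 0)"
      proof (cases "\<exists>w\<in>W. w \<noteq> 0")
        case True
        then have "v \<in> W \<and> v \<noteq> 0" unfolding v_def by (metis (mono_tags, lifting) someI_ex)
        then show ?thesis using rng orth by auto
      next
        case False
        then show ?thesis using x proj_idem_vec[OF proj] unfolding v_def by auto
      qed
      define \<phi> where "\<phi> = nz v"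
      have u: "cinner \<phi> \<phi> = 1" using v nz_unit \<phi>_def by blast
      have P\<phi>: "P *v \<phi> = \<phi>" using v unfolding \<phi>_def nz_def by (simp add: vector_scalar_commute)
      define P' where "P' = P - outer \<phi> \<phi>"
      have sa: "dagger P = P" and idem: "P ** P = P" using proj by (auto simp: is_projector_def)
      have A1: "P ** outer \<phi> \<phi> = outer \<phi> \<phi>" by (simp add: mult_outer P\<phi>)
      have A2: "outer \<phi> \<phi> ** P = outer \<phi> \<phi>" by (simp add: outer_mult sa P\<phi>)
      have A3: "outer \<phi> \<phi> ** outer \<phi> \<phi> = outer \<phi> \<phi>" by (simp add: mult_outer outer_mult_vec u)
      have proj': "is_projector P'"
        unfolding is_projector_def P'_def
        by (simp add: matrix_sub_ldistrib matrix_sub_rdistrib A1 A2 A3 idem dagger_diff sa dagger_outer)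
      have tr': "Re (mtrace P') < real n"
        using tr unfolding P'_def by (simp add: mtrace_diff mtrace_outer u)
      have P'\<phi>: "P' *v \<phi> = 0"
        unfolding P'_def by (simp add: matrix_vector_mult_diff_rdistrib outer_mult_vec u P\<phi>)
      have P'w: "P' *v w = P *v w - cinner w \<phi> *s \<phi>" for w
        unfolding P'_def by (simp add: matrix_vector_mult_diff_rdistrib outer_mult_vec)
      have orthv: "cinner w \<phi> = 0" if "w \<in> W" "w \<noteq> v" for w
        using v that unfolding \<phi>_def nz_def by simp
      define W' where "W' = W - {v}"
      have f1: "finite W'" using fin W'_def by simp
      have f2: "\<forall>w\<in>W'. P' *v w = w" using rng orthv P'w W'_def by simp
      have f3: "\<forall>w\<in>W'. \<forall>w'\<in>W'. w \<noteq> w' \<longrightarrow> cinner w w' = 0" using orth W'_def by simp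
      obtain \<Phi>' where fin': "finite \<Phi>'" and
        un': "\<forall>\<phi>\<in>\<Phi>'. cinner \<phi> \<phi> = 1 \<and> P' *v \<phi> = \<phi>" and
        or': "\<forall>\<phi>\<in>\<Phi>'. \<forall>\<phi>'\<in>\<Phi>'. \<phi> \<noteq> \<phi>' \<longrightarrow> cinner \<phi> \<phi>' = 0" and
        sum': "P' = (\<Sum>\<phi>\<in>\<Phi>'. outer \<phi> \<phi>)" and nz': "\<forall>w\<in>W'. w \<noteq> 0 \<longrightarrow> nz w \<in> \<Phi>'"
        using Suc.IH[rule_format, OF proj' tr' f1 f2[rule_format] f3[rule_format]] by blast
      have orth\<phi>: "cinner \<psi> \<phi> = 0" if "\<psi> \<in> \<Phi>'" for \<psi>
      proof -
        have "cinner \<psi> \<phi> = cinner (P' *v \<psi>) \<phi>" using un' that by simp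
        also have "\<dots> = cinner \<psi> (dagger P' *v \<phi>)" by (rule cinner_mat_left)
        also have "\<dots> = 0" using proj' P'\<phi> by (simp add: is_projector_def)
        finally show ?thesis .
      qed
      have notin: "\<phi> \<notin> \<Phi>'"
      proof
        assume "\<phi> \<in> \<Phi>'"
        then have "P' *v \<phi> = \<phi>" using un' by simp
        then have "\<phi> = 0" using P'\<phi> by simp
        then show False using u by simp
      qed
      have PP': "P = P' + outer \<phi> \<phi>" unfolding P'_def by simp
      show ?thesis
      proof (intro exI[of _ "insert \<phi> \<Phi>'"] conjI)
        show "finite (insert \<phi> \<Phi>')" using fin' by simp
        show "\<forall>\<psi>\<in>insert \<phi> \<Phi>'. cinner \<psi> \<psi> = 1 \<and> P *v \<psi> = \<psi>"
        proof
          fix \<psi> assume "\<psi> \<in> insert \<phi> \<Phi>'"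
          then show "cinner \<psi> \<psi> = 1 \<and> P *v \<psi> = \<psi>"
          proof
            assume "\<psi> = \<phi>" then show ?thesis using u P\<phi> by simp
          next
            assume h: "\<psi> \<in> \<Phi>'"
            then have "P *v \<psi> = P' *v \<psi> + cinner \<psi> \<phi> *s \<phi>"
              unfolding PP' by (simp add: matrix_vector_mult_add_rdistrib outer_mult_vec)
            then show ?thesis using h un' orth\<phi> by simp
          qed
        qed
        show "\<forall>\<psi>\<in>insert \<phi> \<Phi>'. \<forall>\<psi>'\<in>insert \<phi> \<Phi>'. \<psi> \<noteq> \<psi>' \<longrightarrow> cinner \<psi> \<psi>' = 0"
          using or' orth\<phi> cinner_conj[of \<phi>] by (metis complex_cnj_zero insert_iff)
        show "P = (\<Sum>\<psi>\<in>insert \<phi> \<Phi>'. outer \<psi> \<psi>)"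
          using fin' notin PP' sum' by (simp add: add.commute)
        show "\<forall>w\<in>W. w \<noteq> 0 \<longrightarrow> nz w \<in> insert \<phi> \<Phi>'"
          using nz' W'_def \<phi>_def by auto
      qed
    qed
  qed
qed

lemma proj_decomp:
  assumes "is_projector (P::complex^('n::finite)^'n)" "finite W" "\<forall>w\<in>W. P *v w = w"
    "\<forall>w\<in>W. \<forall>w'\<in>W. w \<noteq> w' \<longrightarrow> cinner w w' = 0"
  shows "\<exists>\<Phi>. finite \<Phi> \<and> (\<forall>\<phi>\<in>\<Phi>. cinner \<phi> \<phi> = 1 \<and> P *v \<phi> = \<phi>) \<and>
        (\<forall>\<phi>\<in>\<Phi>. \<forall>\<phi>'\<in>\<Phi>. \<phi> \<noteq> \<phi>' \<longrightarrow> cinner \<phi> \<phi>' = 0) \<and>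
        P = (\<Sum>\<phi>\<in>\<Phi>. outer \<phi> \<phi>) \<and> (\<forall>w\<in>W. w \<noteq> 0 \<longrightarrow> nz w \<in> \<Phi>)"
proof -
  obtain n :: nat where "Re (mtrace P) < real n" using reals_Archimedean2 by blast
  then show ?thesis using proj_decomp_aux[of n] assms by blast
qed


lemma outer_zero_left[simp]: "outer 0 y = 0"
  by (simp add: outer_def vec_eq_iff)

lemma unit_norm: "cinner \<phi> \<phi> = 1 \<Longrightarrow> norm \<phi> = 1"
proof -
  assume "cinner \<phi> \<phi> = 1"
  then have "complex_of_real ((norm \<phi>)^2) = complex_of_real 1" by (simp add: cinner_self_norm)
  then have "(norm \<phi>)^2 = 1" by (simp only: of_real_eq_iff)
  then show ?thesis using norm_ge_zero[of \<phi>] by (simp add: power2_eq_1_iff)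
qed

lemma sum_nth_subset:
  assumes "distinct L" "A \<subseteq> set L"
  shows "(\<Sum>k\<in>{k. k < length L \<and> L ! k \<in> A}. f (L ! k)) = sum f A"
proof -
  have inj: "inj_on (nth L) {k. k < length L \<and> L ! k \<in> A}"
    using assms(1) by (auto simp: inj_on_def nth_eq_iff_index_eq)
  have img: "nth L ` {k. k < length L \<and> L ! k \<in> A} = A"
  proof (intro set_eqI iffI)
    fix x assume "x \<in> A"
    then obtain k where "k < length L" "L ! k = x" using assms(2) by (meson in_set_conv_nth subsetD)
    then show "x \<in> nth L ` {k. k < length L \<and> L ! k \<in> A}" using \<open>x \<in> A\<close> by force
  qed auto
  show ?thesis using sum.reindex[OF inj, of f] img by simp
qed

lemma sum_nth_all:
  assumes "distinct L"
  shows "(\<Sum>k<length L. f (L ! k)) = sum f (set L)"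
proof -
  have "{..<length L} = {k. k < length L \<and> L ! k \<in> set L}" by auto
  then show ?thesis using sum_nth_subset[OF assms, of "set L" f] by simp
qed

lemma foldr_mult_acc: "foldr (**) xs (M::complex^'n^'n) = foldr (**) xs (mat 1) ** M"
  by (induction xs) (simp_all add: matrix_mul_assoc)

lemma hist_op_snoc:
  assumes "length a = length G"
  shows "hist_op (G @ [\<sigma>]) (a @ [l]) = hist_op G a ** \<sigma> ! l"
proof -
  have eq: "map (\<lambda>j. (G @ [\<sigma>]) ! j ! ((a @ [l]) ! j)) [0..<length (G @ [\<sigma>])]
      = map (\<lambda>j. G ! j ! (a ! j)) [0..<length G] @ [\<sigma> ! l]"
    using assms by (simp add: nth_append)
  show ?thesis unfolding hist_op_def eq
    by (simp add: foldr_mult_acc[of _ "\<sigma> ! l"])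
qed

definition hv :: "complex^('n::finite) \<Rightarrow> 'n cmat list list \<Rightarrow> nat list \<Rightarrow> complex^'n" where
  "hv \<psi> F a = dagger (hist_op F a) *v \<psi>"

lemma hv_snoc:
  assumes "length a = length G"
  shows "hv \<psi> (G @ [\<sigma>]) (a @ [l]) = dagger (\<sigma> ! l) *v hv \<psi> G a"
  unfolding hv_def hist_op_snoc[OF assms] dagger_mult by (simp add: matrix_vector_mul_assoc)

lemma hv_Nil: "hv \<psi> [] [] = \<psi>"
  by (simp add: hv_def hist_op_def)

lemma histories_Nil: "histories [] = {[]}"
  by (auto simp: histories_def)

lemma histories_snoc:
  "histories (G @ [\<sigma>]) = (\<lambda>(a, l). a @ [l]) ` (histories G \<times> {..<length \<sigma>})"
proof (intro set_eqI iffI)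
  fix k assume k: "k \<in> histories (G @ [\<sigma>])"
  then have len: "length k = Suc (length G)" by (simp add: histories_def)
  then have kk: "k = butlast k @ [last k]"
    by (metis append_butlast_last_id list.size(3) nat.distinct(1))
  have "butlast k \<in> histories G"
  proof -
    have "\<forall>j<Suc (length G). k ! j < length ((G @ [\<sigma>]) ! j)" using k by (simp add: histories_def)
    then have "\<forall>j<length G. k ! j < length (G ! j)" by (metis less_SucI nth_append)
    then show ?thesis using len unfolding histories_def by (simp add: nth_butlast)
  qed
  moreover have "last k < length \<sigma>"
  proof -
    have "\<forall>j<Suc (length G). k ! j < length ((G @ [\<sigma>]) ! j)" using k by (simp add: histories_def)
    then have "k ! length G < length \<sigma>" by (metis lessI nth_append_length)
    moreover have "last k = k ! length G" using len by (cases k rule: rev_cases) (auto simp: nth_append)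
    ultimately show ?thesis by simp
  qed
  ultimately show "k \<in> (\<lambda>(a, l). a @ [l]) ` (histories G \<times> {..<length \<sigma>})"
    using kk by (intro image_eqI[of _ _ "(butlast k, last k)"]) auto
next
  fix k assume "k \<in> (\<lambda>(a, l). a @ [l]) ` (histories G \<times> {..<length \<sigma>})"
  then show "k \<in> histories (G @ [\<sigma>])"
    unfolding histories_def by (auto simp: nth_append)
qed

lemma histories_snoc_iff:
  "a @ [l] \<in> histories (G @ [\<sigma>]) \<longleftrightarrow> a \<in> histories G \<and> l < length \<sigma>"
  unfolding histories_snoc by auto

lemma finite_histories: "finite (histories F)"
  by (induction F rule: rev_induct) (simp_all add: histories_Nil histories_snoc)

lemma histories_len: "a \<in> histories F \<Longrightarrow> length a = length F"
  by (simp add: histories_def)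

definition mc :: "complex^('n::finite) \<Rightarrow> 'n cmat list list \<Rightarrow> bool" where
  "mc \<psi> F \<longleftrightarrow> (\<forall>a\<in>histories F. \<forall>b\<in>histories F. a \<noteq> b \<longrightarrow> cinner (hv \<psi> F a) (hv \<psi> F b) = 0)"

lemma coherence_pure: "coherence (outer \<psi> \<psi>) F a b = cinner (hv \<psi> F a) (hv \<psi> F b)"
  unfolding coherence_def hv_def by (simp add: mult_outer outer_mult mtrace_outer)

lemma mc_iff: "medium_consistent (outer \<psi> \<psi>) F \<longleftrightarrow> mc \<psi> F"
  unfolding medium_consistent_def mc_def hist_prob_def coherence_pure[symmetric]
  by (auto simp: coherence_def)


lemma exh_proj: "exh_excl \<sigma> \<Longrightarrow> b < length \<sigma> \<Longrightarrow> is_projector (\<sigma> ! b)"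
  by (simp add: exh_excl_def)

lemma exh_sum: "exh_excl \<sigma> \<Longrightarrow> (\<Sum>b<length \<sigma>. \<sigma> ! b) = mat 1"
  by (simp add: exh_excl_def)

lemma exh_orth: "exh_excl \<sigma> \<Longrightarrow> b < length \<sigma> \<Longrightarrow> b' < length \<sigma> \<Longrightarrow> b \<noteq> b' \<Longrightarrow> \<sigma> ! b ** \<sigma> ! b' = 0"
  by (simp add: exh_excl_def)

lemma mc_prefix:
  assumes ex: "exh_excl \<sigma>" and m: "mc \<psi> (G @ [\<sigma>])"
  shows "mc \<psi> G"
  unfolding mc_def
proof (intro ballI impI)
  fix a a' assume a: "a \<in> histories G" and a': "a' \<in> histories G" and ne: "a \<noteq> a'"
  define x where "x = hv \<psi> G a"
  define y where "y = hv \<psi> G a'"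
  have "x = mat 1 *v x" by simp
  also have "\<dots> = (\<Sum>b<length \<sigma>. \<sigma> ! b *v x)" by (simp only: exh_sum[OF ex, symmetric] sum_mat_vec)
  finally have "cinner x y = (\<Sum>b<length \<sigma>. cinner (\<sigma> ! b *v x) y)"
    by (metis cinner_sum_left)
  also have "\<dots> = (\<Sum>b<length \<sigma>. 0)"
  proof (rule sum.cong[OF refl])
    fix b assume "b \<in> {..<length \<sigma>}"
    then have b: "b < length \<sigma>" by simp
    have pr: "is_projector (\<sigma> ! b)" using exh_proj[OF ex b] .
    have "cinner (\<sigma> ! b *v x) y = cinner (\<sigma> ! b *v (\<sigma> ! b *v x)) y" using proj_idem_vec[OF pr] by simp
    also have "\<dots> = cinner (\<sigma> ! b *v x) (\<sigma> ! b *v y)" using cinner_mat_left proj_sa[OF pr] by metis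
    also have "\<dots> = cinner (hv \<psi> (G @ [\<sigma>]) (a @ [b])) (hv \<psi> (G @ [\<sigma>]) (a' @ [b]))"
      using hv_snoc histories_len a a' proj_sa[OF pr] x_def y_def by metis
    also have "\<dots> = 0"
      using m ne a a' b unfolding mc_def by (simp add: histories_snoc_iff)
    finally show "cinner (\<sigma> ! b *v x) y = 0" .
  qed
  finally show "cinner (hv \<psi> G a) (hv \<psi> G a') = 0" using x_def y_def by simp
qed

lemma nz_self: "w \<noteq> 0 \<Longrightarrow> cinner w (nz w) *s nz w = w"
proof -
  assume w: "w \<noteq> 0"
  then have n: "norm w \<noteq> 0" by simp
  have "cinner w (nz w) *s nz w = (complex_of_real (1 / norm w) * complex_of_real (1 / norm w) * cinner w w) *s w"
    unfolding nz_def by (simp add: vector_smult_assoc mult_ac)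
  also have "complex_of_real (1 / norm w) * complex_of_real (1 / norm w) * cinner w w = 1"
    using n by (simp add: cinner_self_norm power2_eq_square flip: of_real_mult)
  finally show ?thesis by simp
qed

lemma nz_orth: "w \<noteq> 0 \<Longrightarrow> cinner (nz w) \<phi> = 0 \<Longrightarrow> cinner w \<phi> = 0"
  unfolding nz_def by simp


lemma main_lemma:
  fixes \<psi> :: "complex^('n::finite)"
  shows "(\<forall>\<sigma>\<in>set F. exh_excl \<sigma>) \<Longrightarrow> mc \<psi> F \<Longrightarrow>
    \<exists>F'. length F' = length F \<and>
      (\<forall>i<length F. exh_excl (F' ! i) \<and> (\<forall>P\<in>set (F' ! i). rank1_projector P) \<and>
                     fine_graining (F' ! i) (F ! i)) \<and>
      mc \<psi> F' \<and> (\<forall>k\<in>histories F'. hv \<psi> F' k = 0 \<or> (\<exists>a\<in>histories F. hv \<psi> F' k = hv \<psi> F a))"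
proof (induction F rule: rev_induct)
  case Nil
  show ?case
    by (intro exI[of _ "[]"]) (auto simp: mc_def histories_Nil)
next
  case (snoc \<sigma> G)
  have ex: "exh_excl \<sigma>" using snoc.prems by simp
  have exG: "\<forall>\<sigma>\<in>set G. exh_excl \<sigma>" using snoc.prems by simp
  have mcF: "mc \<psi> (G @ [\<sigma>])" using snoc.prems by simp
  have mcG: "mc \<psi> G" using mc_prefix[OF ex mcF] .
  obtain G' where lenG': "length G' = length G" and
    levG': "\<forall>i<length G. exh_excl (G' ! i) \<and> (\<forall>P\<in>set (G' ! i). rank1_projector P) \<and>
                     fine_graining (G' ! i) (G ! i)" and
    mcG': "mc \<psi> G'" and
    invG': "\<forall>k\<in>histories G'. hv \<psi> G' k = 0 \<or> (\<exists>a\<in>histories G. hv \<psi> G' k = hv \<psi> G a)"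
    using snoc.IH[OF exG mcG] by blast
  define m where "m = length \<sigma>"
  define H where "H = histories G"
  have pr: "is_projector (\<sigma> ! b)" if "b < m" for b using exh_proj[OF ex] that m_def by simp
  have hvF: "hv \<psi> (G @ [\<sigma>]) (a @ [b]) = \<sigma> ! b *v hv \<psi> G a" if "a \<in> H" "b < m" for a b
    using hv_snoc[of a G] histories_len[of a G] that proj_sa[OF pr[OF that(2)]] H_def by simp
  define W where "W b = (\<lambda>a. \<sigma> ! b *v hv \<psi> G a) ` H" for b
  have "\<forall>b\<in>{..<m}. \<exists>\<Phi>. finite \<Phi> \<and> (\<forall>\<phi>\<in>\<Phi>. cinner \<phi> \<phi> = 1 \<and> \<sigma> ! b *v \<phi> = \<phi>) \<and>
        (\<forall>\<phi>\<in>\<Phi>. \<forall>\<phi>'\<in>\<Phi>. \<phi> \<noteq> \<phi>' \<longrightarrow> cinner \<phi> \<phi>' = 0) \<and>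
        \<sigma> ! b = (\<Sum>\<phi>\<in>\<Phi>. outer \<phi> \<phi>) \<and> (\<forall>w\<in>W b. w \<noteq> 0 \<longrightarrow> nz w \<in> \<Phi>)"
  proof
    fix b assume "b \<in> {..<m}"
    then have b: "b < m" by simp
    show "\<exists>\<Phi>. finite \<Phi> \<and> (\<forall>\<phi>\<in>\<Phi>. cinner \<phi> \<phi> = 1 \<and> \<sigma> ! b *v \<phi> = \<phi>) \<and>
        (\<forall>\<phi>\<in>\<Phi>. \<forall>\<phi>'\<in>\<Phi>. \<phi> \<noteq> \<phi>' \<longrightarrow> cinner \<phi> \<phi>' = 0) \<and>
        \<sigma> ! b = (\<Sum>\<phi>\<in>\<Phi>. outer \<phi> \<phi>) \<and> (\<forall>w\<in>W b. w \<noteq> 0 \<longrightarrow> nz w \<in> \<Phi>)"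
    proof (rule proj_decomp[OF pr[OF b]])
      show "finite (W b)" unfolding W_def H_def by (intro finite_imageI finite_histories)
      show "\<forall>w\<in>W b. \<sigma> ! b *v w = w" unfolding W_def using proj_idem_vec[OF pr[OF b]] by auto
      show "\<forall>w\<in>W b. \<forall>w'\<in>W b. w \<noteq> w' \<longrightarrow> cinner w w' = 0"
      proof (intro ballI impI)
        fix w w' assume "w \<in> W b" "w' \<in> W b" "w \<noteq> w'"
        then obtain a a' where aa: "a \<in> H" "a' \<in> H" "w = \<sigma> ! b *v hv \<psi> G a" "w' = \<sigma> ! b *v hv \<psi> G a'" "a \<noteq> a'"
          unfolding W_def by auto
        then have "a @ [b] \<in> histories (G @ [\<sigma>])" "a' @ [b] \<in> histories (G @ [\<sigma>])" "a @ [b] \<noteq> a' @ [b]"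
          using b H_def m_def by (auto simp: histories_snoc_iff)
        then have "cinner (hv \<psi> (G @ [\<sigma>]) (a @ [b])) (hv \<psi> (G @ [\<sigma>]) (a' @ [b])) = 0"
          using mcF unfolding mc_def by blast
        then show "cinner w w' = 0" using hvF aa b by simp
      qed
    qed
  qed
  from bchoice[OF this] obtain \<Phi> where \<Phi>: "\<forall>b\<in>{..<m}. finite (\<Phi> b) \<and> (\<forall>\<phi>\<in>\<Phi> b. cinner \<phi> \<phi> = 1 \<and> \<sigma> ! b *v \<phi> = \<phi>) \<and>
        (\<forall>\<phi>\<in>\<Phi> b. \<forall>\<phi>'\<in>\<Phi> b. \<phi> \<noteq> \<phi>' \<longrightarrow> cinner \<phi> \<phi>' = 0) \<and>
        \<sigma> ! b = (\<Sum>\<phi>\<in>\<Phi> b. outer \<phi> \<phi>) \<and> (\<forall>w\<in>W b. w \<noteq> 0 \<longrightarrow> nz w \<in> \<Phi> b)"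
    by blast
  have \<Phi>f: "finite (\<Phi> b)" "\<forall>\<phi>\<in>\<Phi> b. cinner \<phi> \<phi> = 1 \<and> \<sigma> ! b *v \<phi> = \<phi>"
    "\<forall>\<phi>\<in>\<Phi> b. \<forall>\<phi>'\<in>\<Phi> b. \<phi> \<noteq> \<phi>' \<longrightarrow> cinner \<phi> \<phi>' = 0"
    "\<sigma> ! b = (\<Sum>\<phi>\<in>\<Phi> b. outer \<phi> \<phi>)" "\<forall>w\<in>W b. w \<noteq> 0 \<longrightarrow> nz w \<in> \<Phi> b"
    if "b < m" for b
    using \<Phi> that by (meson lessThan_iff)+
  have K1: "cinner \<phi> \<phi> = 1" "\<sigma> ! b *v \<phi> = \<phi>" if "b < m" "\<phi> \<in> \<Phi> b" for b \<phi>
    using \<Phi>f(2)[OF that(1)] that(2) by blast+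
  have K2': "cinner \<phi> \<phi>' = 0" if "b < m" "b' < m" "\<phi> \<in> \<Phi> b" "\<phi>' \<in> \<Phi> b'" "b \<noteq> b'" for b b' \<phi> \<phi>'
  proof -
    have "cinner \<phi> \<phi>' = cinner (\<sigma> ! b *v \<phi>) (\<sigma> ! b' *v \<phi>')" using K1 that by simp
    also have "\<dots> = cinner \<phi> (dagger (\<sigma> ! b) *v (\<sigma> ! b' *v \<phi>'))" by (rule cinner_mat_left)
    also have "\<dots> = cinner \<phi> ((\<sigma> ! b ** \<sigma> ! b') *v \<phi>')"
      using proj_sa[OF pr[OF that(1)]] by (simp add: matrix_vector_mul_assoc)
    also have "\<dots> = 0" using exh_orth[OF ex, of b b'] that m_def by simp
    finally show ?thesis .
  qed
  have K2: "cinner \<phi> \<phi>' = 0" if "b < m" "b' < m" "\<phi> \<in> \<Phi> b" "\<phi>' \<in> \<Phi> b'" "\<phi> \<noteq> \<phi>'" for b b' \<phi> \<phi>'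
  proof (cases "b = b'")
    case True then show ?thesis using \<Phi>f(3)[OF that(1)] that by blast
  next
    case False then show ?thesis using K2' that by blast
  qed
  have K4: "b = b'" if "b < m" "b' < m" "\<phi> \<in> \<Phi> b" "\<phi> \<in> \<Phi> b'" for b b' \<phi>
  proof (rule ccontr)
    assume "b \<noteq> b'"
    then have "cinner \<phi> \<phi> = 0" using K2' that by blast
    then show False using K1[OF that(1,3)] by simp
  qed
  define U where "U = (\<Union>b\<in>{..<m}. \<Phi> b)"
  have finU: "finite U" using \<Phi>f(1) by (simp add: U_def)
  obtain L where setL: "set L = U" and dL: "distinct L" using finite_distinct_list[OF finU] by blast
  have inU: "\<exists>b<m. \<phi> \<in> \<Phi> b" if "\<phi> \<in> U" for \<phi> using that U_def by auto
  have U1: "cinner \<phi> \<phi> = 1" if "\<phi> \<in> U" for \<phi> using inU[OF that] K1 by blast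
  have U2: "cinner \<phi> \<phi>' = 0" if "\<phi> \<in> U" "\<phi>' \<in> U" "\<phi> \<noteq> \<phi>'" for \<phi> \<phi>'
    using inU[OF that(1)] inU[OF that(2)] K2 that(3) by blast
  have Lb: "\<exists>b<m. L ! l \<in> \<Phi> b" if "l < length L" for l
    using inU setL that nth_mem by blast
  define \<sigma>' where "\<sigma>' = map (\<lambda>\<phi>. outer \<phi> \<phi>) L"
  have len\<sigma>': "length \<sigma>' = length L" by (simp add: \<sigma>'_def)
  have nth\<sigma>': "\<sigma>' ! k = outer (L ! k) (L ! k)" if "k < length L" for k
    using that by (simp add: \<sigma>'_def)
  have ex': "exh_excl \<sigma>'"
    unfolding exh_excl_def
  proof (intro conjI)
    show "\<forall>P\<in>set \<sigma>'. is_projector P" using U1 outer_unit_proj setL \<sigma>'_def by auto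
    have "(\<Sum>a<length \<sigma>'. \<sigma>' ! a) = (\<Sum>a<length L. outer (L ! a) (L ! a))"
      using len\<sigma>' nth\<sigma>' by simp
    also have "\<dots> = (\<Sum>\<phi>\<in>set L. outer \<phi> \<phi>)" by (rule sum_nth_all[OF dL])
    also have "\<dots> = (\<Sum>b<m. (\<Sum>\<phi>\<in>\<Phi> b. outer \<phi> \<phi>))"
      unfolding setL U_def
    proof (rule sum.UNION_disjoint)
      show "\<forall>i\<in>{..<m}. \<forall>j\<in>{..<m}. i \<noteq> j \<longrightarrow> \<Phi> i \<inter> \<Phi> j = {}"
        using K4 by blast
    qed (use \<Phi>f(1) in auto)
    also have "\<dots> = (\<Sum>b<m. \<sigma> ! b)" using \<Phi>f(4) by simp
    also have "\<dots> = mat 1" using exh_sum[OF ex] m_def by simp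
    finally show "(\<Sum>a<length \<sigma>'. \<sigma>' ! a) = mat 1" .
    show "\<forall>a<length \<sigma>'. \<forall>b<length \<sigma>'. \<sigma>' ! a ** \<sigma>' ! b = (if a = b then \<sigma>' ! a else 0)"
    proof (intro allI impI)
      fix a b assume a: "a < length \<sigma>'" and b: "b < length \<sigma>'"
      have "\<sigma>' ! a ** \<sigma>' ! b = outer (cinner (L ! b) (L ! a) *s L ! a) (L ! b)"
        using a b len\<sigma>' nth\<sigma>' by (simp add: mult_outer outer_mult_vec)
      also have "\<dots> = (if a = b then \<sigma>' ! a else 0)"
      proof (cases "a = b")
        case True
        have "L ! b \<in> U" using setL b len\<sigma>' nth_mem by metis
        then have "cinner (L ! b) (L ! b) = 1" using U1 by blast
        then show ?thesis using True a len\<sigma>' nth\<sigma>' by simp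
      next
        case False
        then have "L ! b \<noteq> L ! a" using dL a b len\<sigma>' by (simp add: nth_eq_iff_index_eq)
        then have "cinner (L ! b) (L ! a) = 0" using U2 setL a b len\<sigma>' nth_mem by metis
        then show ?thesis using False by simp
      qed
      finally show "\<sigma>' ! a ** \<sigma>' ! b = (if a = b then \<sigma>' ! a else 0)" .
    qed
  qed
  have rk': "\<forall>P\<in>set \<sigma>'. rank1_projector P"
    unfolding rank1_projector_def \<sigma>'_def using U1 setL unit_norm by auto
  have fg': "fine_graining \<sigma>' \<sigma>"
    unfolding fine_graining_def
  proof (intro allI impI)
    fix b assume b: "b < length \<sigma>"
    then have bm: "b < m" using m_def by simp
    define S where "S = {k. k < length L \<and> L ! k \<in> \<Phi> b}"
    have "S \<subseteq> {..<length \<sigma>'}" using S_def len\<sigma>' by auto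
    moreover have "\<sigma> ! b = (\<Sum>k\<in>S. \<sigma>' ! k)"
    proof -
      have "(\<Sum>k\<in>S. \<sigma>' ! k) = (\<Sum>k\<in>S. outer (L ! k) (L ! k))"
        using nth\<sigma>' S_def by simp
      also have "\<dots> = (\<Sum>\<phi>\<in>\<Phi> b. outer \<phi> \<phi>)" unfolding S_def
        by (rule sum_nth_subset[OF dL]) (use setL U_def bm in auto)
      also have "\<dots> = \<sigma> ! b" using \<Phi>f(4)[OF bm] by simp
      finally show ?thesis by simp
    qed
    ultimately show "\<exists>S\<subseteq>{..<length \<sigma>'}. \<sigma> ! b = (\<Sum>k\<in>S. \<sigma>' ! k)" by blast
  qed
  define F' where "F' = G' @ [\<sigma>']"
  have hv': "hv \<psi> F' (k0 @ [l]) = cinner (hv \<psi> G' k0) (L ! l) *s L ! l"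
    if "k0 \<in> histories G'" "l < length L" for k0 l
    using hv_snoc[of k0 G' \<psi> \<sigma>' l] histories_len[OF that(1)] nth\<sigma>'[OF that(2)]
    by (simp add: F'_def dagger_outer outer_mult_vec)
  have E: "hv \<psi> F' (k0 @ [l]) = 0 \<or>
      (\<exists>a\<in>H. hv \<psi> G' k0 = hv \<psi> G a \<and> hv \<psi> F' (k0 @ [l]) = hv \<psi> (G @ [\<sigma>]) (a @ [b]))"
    if k0: "k0 \<in> histories G'" and l: "l < length L" and b: "b < m" and lb: "L ! l \<in> \<Phi> b" for k0 l b
  proof (cases "hv \<psi> G' k0 = 0")
    case True then show ?thesis using hv'[OF k0 l] by simp
  next
    case False
    then obtain a where a: "a \<in> H" and eqa: "hv \<psi> G' k0 = hv \<psi> G a" using invG' k0 H_def by blast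
    define \<phi> where "\<phi> = L ! l"
    define x where "x = hv \<psi> G a"
    define w where "w = \<sigma> ! b *v x"
    have wW: "w \<in> W b" using a w_def x_def W_def by simp
    have "cinner x \<phi> = cinner x (\<sigma> ! b *v \<phi>)" using K1(2)[OF b lb] \<phi>_def by simp
    also have "\<dots> = cinner x (dagger (\<sigma> ! b) *v \<phi>)" using proj_sa[OF pr[OF b]] by simp
    also have "\<dots> = cinner w \<phi>" unfolding w_def by (rule cinner_mat_left[symmetric])
    finally have cx: "cinner x \<phi> = cinner w \<phi>" .
    have new: "hv \<psi> F' (k0 @ [l]) = cinner w \<phi> *s \<phi>"
      using hv'[OF k0 l] eqa cx x_def \<phi>_def by simp
    have hw: "hv \<psi> (G @ [\<sigma>]) (a @ [b]) = w" using hvF[OF a b] w_def x_def by simp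
    show ?thesis
    proof (cases "w = 0")
      case True then show ?thesis using new by simp
    next
      case wnz: False
      then have nzw: "nz w \<in> \<Phi> b" using \<Phi>f(5)[OF b] wW by blast
      show ?thesis
      proof (cases "\<phi> = nz w")
        case True
        then have "hv \<psi> F' (k0 @ [l]) = w" using new nz_self[OF wnz] by simp
        then show ?thesis using a eqa hw by (intro disjI2 bexI[of _ a]) auto
      next
        case False
        then have "cinner (nz w) \<phi> = 0" using \<Phi>f(3)[OF b] nzw lb \<phi>_def by metis
        then have "cinner w \<phi> = 0" using nz_orth[OF wnz] by blast
        then show ?thesis using new by simp
      qed
    qed
  qed
  have histF': "histories F' = (\<lambda>(a, l). a @ [l]) ` (histories G' \<times> {..<length L})"
    unfolding F'_def histories_snoc len\<sigma>' ..
  have mcF': "mc \<psi> F'"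
    unfolding mc_def
  proof (intro ballI impI)
    fix k k' assume "k \<in> histories F'" "k' \<in> histories F'" and kne: "k \<noteq> k'"
    then obtain k0 l k0' l' where k: "k = k0 @ [l]" "k0 \<in> histories G'" "l < length L"
      and k': "k' = k0' @ [l']" "k0' \<in> histories G'" "l' < length L"
      unfolding histF' by auto
    obtain b where b: "b < m" "L ! l \<in> \<Phi> b" using Lb[OF k(3)] by blast
    obtain b' where b': "b' < m" "L ! l' \<in> \<Phi> b'" using Lb[OF k'(3)] by blast
    show "cinner (hv \<psi> F' k) (hv \<psi> F' k') = 0"
    proof (cases "hv \<psi> F' k = 0 \<or> hv \<psi> F' k' = 0")
      case True then show ?thesis by auto
    next
      case False
      then have X0: "hv \<psi> F' k \<noteq> 0" and Y0: "hv \<psi> F' k' \<noteq> 0" by auto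
      obtain a where a: "a \<in> H" "hv \<psi> G' k0 = hv \<psi> G a" "hv \<psi> F' k = hv \<psi> (G @ [\<sigma>]) (a @ [b])"
        using E[OF k(2,3) b] X0 k(1) by blast
      obtain a' where a': "a' \<in> H" "hv \<psi> G' k0' = hv \<psi> G a'" "hv \<psi> F' k' = hv \<psi> (G @ [\<sigma>]) (a' @ [b'])"
        using E[OF k'(2,3) b'] Y0 k'(1) by blast
      show ?thesis
      proof (cases "l = l'")
        case False
        then have "L ! l \<noteq> L ! l'" using dL k(3) k'(3) by (simp add: nth_eq_iff_index_eq)
        then have "cinner (L ! l) (L ! l') = 0" using U2 setL k(3) k'(3) nth_mem by metis
        then show ?thesis using hv'[OF k(2,3)] hv'[OF k'(2,3)] k(1) k'(1) by simp
      next
        case True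
        then have bb: "b' = b" using K4 b b' by metis
        have k0ne: "k0 \<noteq> k0'" using kne k k' True by simp
        have ane: "a \<noteq> a'"
        proof
          assume "a = a'"
          then have "hv \<psi> G' k0 = hv \<psi> G' k0'" using a a' by simp
          moreover have "cinner (hv \<psi> G' k0) (hv \<psi> G' k0') = 0"
            using mcG' k0ne k(2) k'(2) unfolding mc_def by blast
          ultimately have "hv \<psi> G' k0 = 0" using cinner_self_eq_0 by metis
          then have "hv \<psi> F' k = 0" using hv'[OF k(2,3)] k(1) by simp
          then show False using X0 by simp
        qed
        have "a @ [b] \<in> histories (G @ [\<sigma>])" "a' @ [b] \<in> histories (G @ [\<sigma>])"
          using a(1) a'(1) b(1) H_def m_def by (auto simp: histories_snoc_iff)
        moreover have "a @ [b] \<noteq> a' @ [b]" using ane by simp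
        ultimately have "cinner (hv \<psi> (G @ [\<sigma>]) (a @ [b])) (hv \<psi> (G @ [\<sigma>]) (a' @ [b])) = 0"
          using mcF unfolding mc_def by blast
        then show ?thesis using a(3) a'(3) bb by simp
      qed
    qed
  qed
  have invF': "\<forall>k\<in>histories F'. hv \<psi> F' k = 0 \<or> (\<exists>a\<in>histories (G @ [\<sigma>]). hv \<psi> F' k = hv \<psi> (G @ [\<sigma>]) a)"
  proof
    fix k assume "k \<in> histories F'"
    then obtain k0 l where k: "k = k0 @ [l]" "k0 \<in> histories G'" "l < length L"
      unfolding histF' by auto
    obtain b where b: "b < m" "L ! l \<in> \<Phi> b" using Lb[OF k(3)] by blast
    have "a @ [b] \<in> histories (G @ [\<sigma>])" if "a \<in> H" for a
      using that b(1) H_def m_def by (auto simp: histories_snoc_iff)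
    then show "hv \<psi> F' k = 0 \<or> (\<exists>a\<in>histories (G @ [\<sigma>]). hv \<psi> F' k = hv \<psi> (G @ [\<sigma>]) a)"
      using E[OF k(2,3) b] k(1) by blast
  qed
  have levF': "\<forall>i<length (G @ [\<sigma>]). exh_excl (F' ! i) \<and> (\<forall>P\<in>set (F' ! i). rank1_projector P) \<and>
                     fine_graining (F' ! i) ((G @ [\<sigma>]) ! i)"
  proof (intro allI impI)
    fix i assume i: "i < length (G @ [\<sigma>])"
    show "exh_excl (F' ! i) \<and> (\<forall>P\<in>set (F' ! i). rank1_projector P) \<and>
                     fine_graining (F' ! i) ((G @ [\<sigma>]) ! i)"
    proof (cases "i < length G")
      case True
      then show ?thesis using levG' lenG' by (simp add: F'_def nth_append)
    next
      case False
      then have "i = length G" using i by simp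
      then show ?thesis using ex' rk' fg' lenG' by (simp add: F'_def nth_append)
    qed
  qed
  show ?case
    by (intro exI[of _ F'] conjI) (use lenG' levF' mcF' invF' F'_def in auto)
qed

theorem theorem1:
  fixes \<rho> :: "('n::finite) cmat" and F :: "'n cmat list list"
  assumes "pure_state \<rho>"
    and "\<forall>\<sigma>\<in>set F. exh_excl \<sigma>"
    and "medium_consistent \<rho> F"
  shows "\<exists>F'. length F' = length F \<and>
           (\<forall>i<length F. exh_excl (F' ! i) \<and>
                          (\<forall>P\<in>set (F' ! i). rank1_projector P) \<and>
                          fine_graining (F' ! i) (F ! i)) \<and>
           medium_consistent \<rho> F'"
proof -
  obtain \<psi> where \<rho>: "\<rho> = outer \<psi> \<psi>" using assms(1) unfolding pure_state_def by blast
  have "mc \<psi> F" using assms(3) mc_iff \<rho> by blast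
  then obtain F' where "length F' = length F" and
    "\<forall>i<length F. exh_excl (F' ! i) \<and> (\<forall>P\<in>set (F' ! i). rank1_projector P) \<and>
                     fine_graining (F' ! i) (F ! i)" and "mc \<psi> F'"
    using main_lemma[OF assms(2)] by blast
  then show ?thesis using mc_iff \<rho> by blast
qed

end
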